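(* Let $n\ge1$, $d\ge1$ and let $U\subseteq\mathbb R^d$ be a finite set with $|U|\ge3$ contained in the closed unit ball, with a fixed enumeration $U=\{v_1,\dots,v_{|U|}\}$; let $P(U)$ be its power set. Then there exist sets $\Psi_1,\dots,\Psi_n\subseteq\mathbb R^{2n}$, a number $0<\epsilon<\frac1n$, and maps $\phi:P(U)\times[n]\to\mathbb R^{2n}$ and $\alpha:\mathbb R^{2n}\to U$ such that: (i) $\|\phi(V,j)\|\le 1$ for all $V\subseteq U$, $j\in[n]$; (ii) for every $k\in[n]$ and $\psi\in\Psi_k$, $\|\psi\|\le1$ and $\|\alpha(\psi)\|\le1$; (iii) for every $k\in[n]$ and all $V_1,\dots,V_k\subseteq U$, the vector $\psi_k^*=\frac1n\sum_{i=1}^k\phi(V_i,i)$ lies in $\Psi_k$ and satisfies: for every $\psi\in\Psi_k$ with $\psi\ne\psi_k^*$, $\big\langle\psi_k^*,\frac1n\sum_{i=1}^k\phi(V_i,i)\big\rangle\ge\big\langle\psi,\frac1n\sum_{i=1}^k\phi(V_i,i)\big\rangle+\epsilon$; and if $\bigcap_{i=1}^kV_i\ne\emptyset$ then $\alpha(\psi_k^* )=v_m$ where $m=\min\{i: v_i\in\bigcap_{l=1}^kV_l\}$.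
   Context: $[N]=\{1,\dots,N\}$; norms are Euclidean. *)

theory Defs
  imports "HOL-Analysis.Analysis"
begin

end

theory Submission
  imports Defs
begin

lemma inner_phi:
  fixes a b :: "nat \<Rightarrow> 'm::finite"
  assumes "a j \<noteq> b l" "a l \<noteq> b j" "a j = a l \<longleftrightarrow> j = l" "b j = b l \<longleftrightarrow> j = l"
  shows "inner (axis (a j) (x1::real) + axis (b j) y1) (axis (a l) x2 + axis (b l) y2)
         = (if j = l then x1*x2 + y1*y2 else 0)"
  using assms by (auto simp: inner_add_left inner_add_right inner_axis_axis)

lemma axis_comp: "(axis i (x::real) :: real^'m) $ j = (if j = i then x else 0)"
  by (simp add: axis_def)

lemma circ: fixes x :: real
  shows "(1/sqrt(1+x^2))^2 + (x/sqrt(1+x^2))^2 = 1" "1/sqrt(1+x^2) > 0"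
proof -
  have p: "1 + x^2 > 0" by (simp add: add_pos_nonneg)
  show "(1/sqrt(1+x^2))^2 + (x/sqrt(1+x^2))^2 = 1"
    using p by (simp add: power_divide field_simps)
  show "1/sqrt(1+x^2) > 0" using p by simp
qed

lemma circ_inj: fixes x y :: real
  assumes "1/sqrt(1+x^2) = 1/sqrt(1+y^2)" "x/sqrt(1+x^2) = y/sqrt(1+y^2)"
  shows "x = y"
proof -
  have "sqrt(1+x^2) > 0" "sqrt(1+y^2) > 0" by (simp_all add: add_pos_nonneg)
  then have "sqrt(1+x^2) = sqrt(1+y^2)" using assms(1) by (simp add: field_simps)
  then show ?thesis using assms(2) \<open>sqrt(1+x^2) > 0\<close> by (simp add: field_simps)
qed

theorem mainTheorem5:
  fixes n :: nat
    and U :: "(real ^ 'd) set"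
    and v :: "nat \<Rightarrow> real ^ 'd"
  assumes n_ge: "n \<ge> 1"
    and dimm: "CARD('m) = 2 * n"
    and finU: "finite U"
    and cardU: "card U \<ge> 3"
    and ballU: "\<forall>u\<in>U. norm u \<le> 1"
    and enum: "bij_betw v {1..card U} U"
  shows "\<exists>(\<Psi> :: nat \<Rightarrow> (real ^ 'm) set) (\<epsilon> :: real)
            (\<phi> :: (real ^ 'd) set \<Rightarrow> nat \<Rightarrow> real ^ 'm)
            (\<alpha> :: real ^ 'm \<Rightarrow> real ^ 'd).
     0 < \<epsilon> \<and> \<epsilon> < 1 / real n \<and>
     (\<forall>x. \<alpha> x \<in> U) \<and>
     (\<forall>V j. V \<subseteq> U \<and> j \<in> {1..n} \<longrightarrow> norm (\<phi> V j) \<le> 1) \<and>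
     (\<forall>k\<in>{1..n}. \<forall>\<psi>\<in>\<Psi> k. norm \<psi> \<le> 1 \<and> norm (\<alpha> \<psi>) \<le> 1) \<and>
     (\<forall>k\<in>{1..n}. \<forall>Vs :: nat \<Rightarrow> (real ^ 'd) set.
        (\<forall>i\<in>{1..k}. Vs i \<subseteq> U) \<longrightarrow>
        (let s = (1 / real n) *\<^sub>R (\<Sum>i=1..k. \<phi> (Vs i) i) in
           s \<in> \<Psi> k \<and>
           (\<forall>\<psi>\<in>\<Psi> k. \<psi> \<noteq> s \<longrightarrow> inner s s \<ge> inner \<psi> s + \<epsilon>) \<and>
           ((\<Inter>i\<in>{1..k}. Vs i) \<noteq> {} \<longrightarrow>
              \<alpha> s = v (Min {i \<in> {1..card U}. v i \<in> (\<Inter>l\<in>{1..k}. Vs l)}))))"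
proof -
  have n0: "real n > 0" using n_ge by simp
  have cardm: "card (UNIV::'m set) = 2*n" using dimm by simp
  obtain h :: "nat \<Rightarrow> 'm" where h: "bij_betw h {0..<2*n} UNIV"
    using ex_bij_betw_nat_finite[of "UNIV::'m set"] cardm by auto
  have hinj: "inj_on h {0..<2*n}" using h bij_betw_def by blast
  define a where "a j = h (2*j-2)" for j
  define b where "b j = h (2*j-1)" for j
  have ab: "a j \<noteq> b l \<and> (a j = a l \<longleftrightarrow> j = l) \<and> (b j = b l \<longleftrightarrow> j = l)"
    if "j \<in> {1..n}" "l \<in> {1..n}" for j l
  proof -
    have r: "2*j-2 \<in> {0..<2*n}" "2*j-1 \<in> {0..<2*n}" "2*l-2 \<in> {0..<2*n}" "2*l-1 \<in> {0..<2*n}"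
      using that by auto
    have "a j \<noteq> b l" unfolding a_def b_def
      using inj_onD[OF hinj _ r(1) r(4)] that by auto presburger
    moreover have "a j = a l \<longleftrightarrow> j = l" unfolding a_def
      using inj_onD[OF hinj _ r(1) r(3)] that by auto
    moreover have "b j = b l \<longleftrightarrow> j = l" unfolding b_def
      using inj_onD[OF hinj _ r(2) r(4)] that by auto
    ultimately show ?thesis by blast
  qed
  obtain g where g: "bij_betw g (Pow U) {0..<card (Pow U)}"
    using ex_bij_betw_finite_nat[of "Pow U"] finU by auto
  have ginj: "inj_on g (Pow U)" using g bij_betw_def by blast
  define c where "c V = 1/sqrt(1+(real (g V))^2)" for V
  define d where "d V = real (g V)/sqrt(1+(real (g V))^2)" for V
  have cd1: "(c V)^2 + (d V)^2 = 1" for V unfolding c_def d_def by (rule circ(1))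
  have cpos: "c V > 0" for V unfolding c_def by (rule circ(2))
  have cdinj: "V = W" if "V \<subseteq> U" "W \<subseteq> U" "c V = c W" "d V = d W" for V W
  proof -
    have "real (g V) = real (g W)" using circ_inj that(3,4) unfolding c_def d_def by blast
    then show ?thesis using inj_onD[OF ginj] that(1,2) by auto
  qed
  define \<phi> :: "(real^'d) set \<Rightarrow> nat \<Rightarrow> real^'m" where
    "\<phi> V j = axis (a j) (c V) + axis (b j) (d V)" for V j
  define S where "S k Vs = (1 / real n) *\<^sub>R (\<Sum>i=1..k. \<phi> (Vs i) i)" for k Vs
  define \<Psi> where "\<Psi> k = {S k Ws | Ws. \<forall>i\<in>{1..k}. Ws i \<subseteq> U}" for k
  have iphi: "inner (\<phi> A j) (\<phi> B l) = (if j = l then c A * c B + d A * d B else 0)"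
    if "j \<in> {1..n}" "l \<in> {1..n}" for A B j l
    unfolding \<phi>_def using ab[OF that] ab[OF that(2,1)] by (intro inner_phi) auto
  have nphi: "norm (\<phi> V j) = 1" if "j \<in> {1..n}" for V j
    using iphi[OF that that, of V V] cd1[of V] by (simp add: norm_eq_sqrt_inner power2_eq_square)
  have iS: "inner (S k X) (S k Y) = (1/real n)*(1/real n) * (\<Sum>j=1..k. c (X j) * c (Y j) + d (X j) * d (Y j))"
    if "k \<le> n" for k X Y
  proof -
    have "inner (S k X) (S k Y) = (1/real n)*(1/real n) * (\<Sum>j=1..k. \<Sum>l=1..k. inner (\<phi> (X j) j) (\<phi> (Y l) l))"
      unfolding S_def inner_scaleR_left inner_scaleR_right inner_sum_left inner_sum_right
      by (subst sum.swap) (simp add: sum_divide_distrib)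
    also have "(\<Sum>j=1..k. \<Sum>l=1..k. inner (\<phi> (X j) j) (\<phi> (Y l) l))
       = (\<Sum>j=1..k. \<Sum>l=1..k. if j = l then c (X j) * c (Y l) + d (X j) * d (Y l) else 0)"
      using that by (intro sum.cong refl, subst iphi) auto
    also have "\<dots> = (\<Sum>j=1..k. c (X j) * c (Y j) + d (X j) * d (Y j))"
      by (intro sum.cong refl) (simp add: sum.delta)
    finally show ?thesis .
  qed
  have compa: "S k Vs $ a l = (1/real n) * (if l \<le> k then c (Vs l) else 0)"
    and compb: "S k Vs $ b l = (1/real n) * (if l \<le> k then d (Vs l) else 0)"
    if "l \<in> {1..n}" "k \<le> n" for k l Vs
  proof -
    have "S k Vs $ a l = (1/real n) * (\<Sum>i=1..k. if i = l then c (Vs i) else 0)"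
      unfolding S_def \<phi>_def using that ab
      by (auto simp: sum_component axis_comp intro!: sum.cong)
    then show "S k Vs $ a l = (1/real n) * (if l \<le> k then c (Vs l) else 0)"
      using that by (simp add: sum.delta')
    have ab': "b l \<noteq> a i" if "i \<in> {1..n}" for i using ab[OF that \<open>l \<in> {1..n}\<close>] by metis
    have "S k Vs $ b l = (1/real n) * (\<Sum>i=1..k. if i = l then d (Vs i) else 0)"
      unfolding S_def \<phi>_def using that ab ab'
      by (auto simp: sum_component axis_comp intro!: sum.cong)
    then show "S k Vs $ b l = (1/real n) * (if l \<le> k then d (Vs l) else 0)"
      using that by (simp add: sum.delta')
  qed
  have uniqk: "k = k'" if "k \<in> {1..n}" "k' \<in> {1..n}" "S k Vs = S k' Ws" for k k' Vs Ws
  proof (rule ccontr)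
    assume "k \<noteq> k'"
    then consider "k < k'" | "k' < k" by linarith
    then show False
    proof cases
      case 1
      have "S k Vs $ a k' = S k' Ws $ a k'" using that by simp
      then show False using compa[of k' k Vs] compa[of k' k' Ws] that 1 cpos[of "Ws k'"] n0 by auto
    next
      case 2
      have "S k Vs $ a k = S k' Ws $ a k" using that by simp
      then show False using compa[of k k Vs] compa[of k k' Ws] that 2 cpos[of "Vs k"] n0 by auto
    qed
  qed
  have uniqV: "Vs i = Ws i" if "k \<in> {1..n}" "S k Vs = S k Ws" "\<forall>i\<in>{1..k}. Vs i \<subseteq> U"
    "\<forall>i\<in>{1..k}. Ws i \<subseteq> U" "i \<in> {1..k}" for k Vs Ws i
  proof -
    have il: "i \<in> {1..n}" "k \<le> n" using that by auto
    have "c (Vs i) = c (Ws i)" using compa[OF il, of Vs] compa[OF il, of Ws] that(2,5) n0 by auto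
    moreover have "d (Vs i) = d (Ws i)" using compb[OF il, of Vs] compb[OF il, of Ws] that(2,5) n0 by auto
    ultimately show ?thesis using cdinj that(3,4,5) by blast
  qed
  define P where "P = (\<lambda>V. (c V, d V)) ` Pow U"
  define D where "D = {(fst p - fst q)^2 + (snd p - snd q)^2 | p q. p \<in> P \<and> q \<in> P \<and> p \<noteq> q}"
  have finP: "finite P" unfolding P_def using finU by simp
  have "D \<subseteq> (\<lambda>(p,q). (fst p - fst q)^2 + (snd p - snd q)^2) ` (P \<times> P)" unfolding D_def by (auto intro!: image_eqI[of _ _ "((a,b),(aa,ba))" for a b aa ba])
  then have finD: "finite D" using finP by (meson finite_SigmaI finite_imageI finite_subset)
  define \<delta> where "\<delta> = Min (insert 1 D)"
  have Dpos: "x > 0" if xD: "x \<in> D" for x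
  proof -
    obtain p q where "x = (fst p - fst q)^2 + (snd p - snd q)^2" "p \<noteq> q" using xD unfolding D_def by blast
    moreover have "fst p \<noteq> fst q \<or> snd p \<noteq> snd q" using \<open>p \<noteq> q\<close> by (simp add: prod_eq_iff)
    ultimately show ?thesis by (auto simp: add_pos_nonneg add_nonneg_pos)
  qed
  have dpos: "\<delta> > 0" unfolding \<delta>_def using finD Dpos by (subst Min_gr_iff) auto
  have dle: "\<delta> \<le> x" if "x \<in> D" for x unfolding \<delta>_def using finD that by simp
  define \<epsilon> where "\<epsilon> = min (\<delta> / (2 * real n * real n)) (1 / (2 * real n))"
  have sep: "inner (S k Vs) (S k Vs) \<ge> inner (S k Ws) (S k Vs) + \<epsilon>"
    if "k \<in> {1..n}" "\<forall>i\<in>{1..k}. Vs i \<subseteq> U" "\<forall>i\<in>{1..k}. Ws i \<subseteq> U" "S k Ws \<noteq> S k Vs" for k Vs Ws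
  proof -
    have kn: "k \<le> n" using that by simp
    define T where "T j = ((c (Vs j) - c (Ws j))^2 + (d (Vs j) - d (Ws j))^2) / 2" for j
    have diff: "inner (S k Vs) (S k Vs) - inner (S k Ws) (S k Vs) = (1/real n)*(1/real n) * (\<Sum>j=1..k. T j)"
    proof -
      have "inner (S k Vs) (S k Vs) - inner (S k Ws) (S k Vs)
          = (1/real n)*(1/real n) * ((\<Sum>j=1..k. c (Vs j) * c (Vs j) + d (Vs j) * d (Vs j)) - (\<Sum>j=1..k. c (Ws j) * c (Vs j) + d (Ws j) * d (Vs j)))"
        using iS[OF kn] by (simp add: right_diff_distrib)
      also have "(\<Sum>j=1..k. c (Vs j) * c (Vs j) + d (Vs j) * d (Vs j)) - (\<Sum>j=1..k. c (Ws j) * c (Vs j) + d (Ws j) * d (Vs j))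
          = (\<Sum>j=1..k. T j)"
        unfolding sum_subtractf[symmetric]
      proof (intro sum.cong refl)
        fix j
        have "c (Vs j)^2 + d (Vs j)^2 = 1" "c (Ws j)^2 + d (Ws j)^2 = 1" using cd1 by auto
        then show "c (Vs j) * c (Vs j) + d (Vs j) * d (Vs j) - (c (Ws j) * c (Vs j) + d (Ws j) * d (Vs j)) = T j"
          unfolding T_def by (simp add: power2_eq_square algebra_simps)
      qed
      finally show ?thesis .
    qed
    have "\<exists>j\<in>{1..k}. (c (Vs j), d (Vs j)) \<noteq> (c (Ws j), d (Ws j))"
    proof (rule ccontr)
      assume "\<not> ?thesis"
      then have "\<phi> (Ws j) j = \<phi> (Vs j) j" if "j \<in> {1..k}" for j using that unfolding \<phi>_def by auto
      then have "S k Ws = S k Vs" unfolding S_def by (metis (no_types, lifting) sum.cong)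
      then show False using that(4) by simp
    qed
    then obtain j where j: "j \<in> {1..k}" "(c (Vs j), d (Vs j)) \<noteq> (c (Ws j), d (Ws j))" by blast
    have "2 * T j \<in> D" unfolding D_def P_def T_def using j that(2,3)
      by (intro CollectI exI[of _ "(c (Vs j), d (Vs j))"] exI[of _ "(c (Ws j), d (Ws j))"]) auto
    then have Tj: "T j \<ge> \<delta> / 2" using dle by fastforce
    have "T j \<le> (\<Sum>j=1..k. T j)" using j by (intro member_le_sum) (auto simp: T_def)
    then have "(\<Sum>j=1..k. T j) \<ge> \<delta>/2" using Tj by linarith
    then have "(1/real n)*(1/real n) * (\<Sum>j=1..k. T j) \<ge> (1/real n)*(1/real n) * (\<delta>/2)"
      using n0 by (intro mult_left_mono) auto
    moreover have "(1/real n)*(1/real n) * (\<delta>/2) = \<delta> / (2 * real n * real n)" by simp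
    moreover have "\<epsilon> \<le> \<delta> / (2 * real n * real n)" unfolding \<epsilon>_def by simp
    ultimately show ?thesis using diff by linarith
  qed
  obtain u0 where u0: "u0 \<in> U" using cardU by (metis card.empty ex_in_conv not_numeral_le_zero)
  define good where "good \<psi> k Vs \<longleftrightarrow> k \<in> {1..n} \<and> (\<forall>i\<in>{1..k}. Vs i \<subseteq> U) \<and> \<psi> = S k Vs \<and> (\<Inter>i\<in>{1..k}. Vs i) \<noteq> {}"
    for \<psi> k Vs
  define F where "F p = v (Min {i \<in> {1..card U}. v i \<in> (\<Inter>l\<in>{1..fst p}. snd p l)})" for p :: "nat \<times> (nat \<Rightarrow> (real^'d) set)"
  define \<alpha> where "\<alpha> \<psi> = (if \<exists>p. good \<psi> (fst p) (snd p) then F (SOME p. good \<psi> (fst p) (snd p)) else u0)" for \<psi>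
  have FU: "F p \<in> U" if gd: "good \<psi> (fst p) (snd p)" for \<psi> p
  proof -
    let ?I = "\<Inter>l\<in>{1..fst p}. snd p l"
    have gd1: "fst p \<in> {1..n}" "\<forall>i\<in>{1..fst p}. snd p i \<subseteq> U" "?I \<noteq> {}"
      using gd unfolding good_def by simp_all
    obtain u where u: "u \<in> ?I" using gd1(3) by blast
    have k1: "1 \<in> {1..fst p}" using gd1(1) by simp
    have "?I \<subseteq> snd p 1" using k1 by (rule INT_lower)
    then have IU: "?I \<subseteq> U" using gd1(2) k1 by blast
    have "u \<in> v ` {1..card U}" using enum u IU unfolding bij_betw_def by blast
    then obtain i where i: "i \<in> {1..card U}" "v i = u" by blast
    let ?M = "{i \<in> {1..card U}. v i \<in> ?I}"
    have "i \<in> ?M" using i u by simp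
    then have "?M \<noteq> {}" by blast
    moreover have "finite ?M" by simp
    ultimately have "Min ?M \<in> ?M" by (rule Min_in[rotated])
    then have "v (Min ?M) \<in> ?I" by simp
    then show ?thesis unfolding F_def using IU by blast
  qed
  have \<alpha>U: "\<alpha> x \<in> U" for x
  proof (cases "\<exists>p. good x (fst p) (snd p)")
    case True
    then have "good x (fst (SOME p. good x (fst p) (snd p))) (snd (SOME p. good x (fst p) (snd p)))"
      by (rule someI_ex)
    then show ?thesis unfolding \<alpha>_def using True FU by simp
  next
    case False
    then show ?thesis unfolding \<alpha>_def using u0 by simp
  qed
  show ?thesis
  proof (intro exI[of _ \<Psi>] exI[of _ \<epsilon>] exI[of _ \<phi>] exI[of _ \<alpha>] conjI)
    show "0 < \<epsilon>" unfolding \<epsilon>_def using dpos n0 by simp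
    have "1 / (2 * real n) < 1 / real n" using n0 by (simp add: field_simps)
    then show "\<epsilon> < 1 / real n" unfolding \<epsilon>_def by linarith
    show "\<forall>x. \<alpha> x \<in> U" using \<alpha>U by blast
    show "\<forall>V j. V \<subseteq> U \<and> j \<in> {1..n} \<longrightarrow> norm (\<phi> V j) \<le> 1" using nphi by simp
    show "\<forall>k\<in>{1..n}. \<forall>\<psi>\<in>\<Psi> k. norm \<psi> \<le> 1 \<and> norm (\<alpha> \<psi>) \<le> 1"
    proof (intro ballI conjI)
      fix k \<psi> assume k: "k \<in> {1..n}" and "\<psi> \<in> \<Psi> k"
      then obtain Ws where \<psi>: "\<psi> = S k Ws" unfolding \<Psi>_def by auto
      have "norm (\<Sum>i=1..k. \<phi> (Ws i) i) \<le> (\<Sum>i=1..k. norm (\<phi> (Ws i) i))" by (rule norm_sum)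
      also have "\<dots> = real k" using k nphi by simp
      finally have "norm \<psi> \<le> (1/real n) * real k" unfolding \<psi> S_def using n0 by (simp add: divide_right_mono)
      also have "\<dots> \<le> 1" using k n0 by (simp add: field_simps)
      finally show "norm \<psi> \<le> 1" .
      show "norm (\<alpha> \<psi>) \<le> 1" using \<alpha>U ballU by blast
    qed
    show "\<forall>k\<in>{1..n}. \<forall>Vs :: nat \<Rightarrow> (real ^ 'd) set.
        (\<forall>i\<in>{1..k}. Vs i \<subseteq> U) \<longrightarrow>
        (let s = (1 / real n) *\<^sub>R (\<Sum>i=1..k. \<phi> (Vs i) i) in
           s \<in> \<Psi> k \<and>
           (\<forall>\<psi>\<in>\<Psi> k. \<psi> \<noteq> s \<longrightarrow> inner s s \<ge> inner \<psi> s + \<epsilon>) \<and>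
           ((\<Inter>i\<in>{1..k}. Vs i) \<noteq> {} \<longrightarrow>
              \<alpha> s = v (Min {i \<in> {1..card U}. v i \<in> (\<Inter>l\<in>{1..k}. Vs l)})))"
    proof (intro ballI allI impI)
      fix k Vs assume k: "k \<in> {1..n}" and Vs: "\<forall>i\<in>{1..k}. Vs i \<subseteq> U"
      have s: "(1 / real n) *\<^sub>R (\<Sum>i=1..k. \<phi> (Vs i) i) = S k Vs" unfolding S_def by simp
      have A: "S k Vs \<in> \<Psi> k" unfolding \<Psi>_def using Vs by auto
      have B: "\<forall>\<psi>\<in>\<Psi> k. \<psi> \<noteq> S k Vs \<longrightarrow> inner (S k Vs) (S k Vs) \<ge> inner \<psi> (S k Vs) + \<epsilon>"
        unfolding \<Psi>_def using sep[OF k Vs] by auto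
      have C: "\<alpha> (S k Vs) = v (Min {i \<in> {1..card U}. v i \<in> (\<Inter>l\<in>{1..k}. Vs l)})"
        if ne: "(\<Inter>i\<in>{1..k}. Vs i) \<noteq> {}"
      proof -
        have g0: "good (S k Vs) (fst (k,Vs)) (snd (k,Vs))" unfolding good_def using k Vs ne by simp
        then have ex: "\<exists>p. good (S k Vs) (fst p) (snd p)" by blast
        define p where "p = (SOME p. good (S k Vs) (fst p) (snd p))"
        have gp: "good (S k Vs) (fst p) (snd p)" unfolding p_def using someI_ex[OF ex] .
        have fk: "fst p = k" using uniqk[of k "fst p" Vs "snd p"] gp k unfolding good_def by auto
        have eqV: "snd p i = Vs i" if "i \<in> {1..k}" for i
          using uniqV[OF k, of Vs "snd p" i] gp fk Vs that unfolding good_def by auto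
        have e: "(\<Inter>l\<in>{1..fst p}. snd p l) = (\<Inter>l\<in>{1..k}. Vs l)" using fk eqV by auto
        have "\<alpha> (S k Vs) = F p" unfolding \<alpha>_def p_def using ex by simp
        also have "F p = v (Min {i \<in> {1..card U}. v i \<in> (\<Inter>l\<in>{1..k}. Vs l)})"
          unfolding F_def e ..
        finally show ?thesis .
      qed
      show "let s = (1 / real n) *\<^sub>R (\<Sum>i=1..k. \<phi> (Vs i) i) in
           s \<in> \<Psi> k \<and>
           (\<forall>\<psi>\<in>\<Psi> k. \<psi> \<noteq> s \<longrightarrow> inner s s \<ge> inner \<psi> s + \<epsilon>) \<and>
           ((\<Inter>i\<in>{1..k}. Vs i) \<noteq> {} \<longrightarrow>
              \<alpha> s = v (Min {i \<in> {1..card U}. v i \<in> (\<Inter>l\<in>{1..k}. Vs l)}))"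
        unfolding s Let_def using A B C by blast
    qed
  qed
qed

end
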